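(* Let $D,\beta,\delta,\alpha\in\mathbb R$ with $\beta\ge0$ and $(D,\beta)\neq(0,0)$, and let $\lambda\in\mathbb C\setminus\sigma_{\mathrm{ess}}$, where $\sigma_{\mathrm{ess}}=\{(\delta\pm i\alpha)-s^2(\beta\pm i\frac D2): s\in\mathbb R\}$ (signs taken together). Let $\mathbf A_\infty(\lambda)=\begin{bmatrix}\mathbf 0&\mathbf I\\ \mathbf B^{-1}(\lambda\mathbf I-\mathbf N_0)&\mathbf 0\end{bmatrix}$ with $\mathbf B=\begin{bmatrix}\beta&-\frac D2\\ \frac D2&\beta\end{bmatrix}$, $\mathbf N_0=\begin{bmatrix}\delta&-\alpha\\ \alpha&\delta\end{bmatrix}$. Then exactly one of the following holds: (1) $\mathbf A_\infty(\lambda)$ has four distinct eigenvalues; (2) $(D,\alpha)=(0,0)$, and if $\lambda\in\mathbb R$ then $\lambda>\delta$; in this case $\mathbf A_\infty(\lambda)$ has two repeated eigenvalues $\pm\sqrt{(\lambda-\delta)/\beta}$; (3) $D\neq0$ and $\alpha/D<0$; in this case $\lambda=-\frac{2\alpha\beta}{D}+\delta$ and $\mathbf A_\infty(\lambda)$ has two repeated eigenvalues $\pm\sqrt{-2\alpha/D}=\pm\sqrt{(\lambda-\delta)/\beta}$.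
   Context: $\mathbf I,\mathbf 0$ denote the $2\times 2$ identity and zero matrices, so $\mathbf A_\infty(\lambda)\in\mathbb C^{4\times 4}$. *)

theory Defs
  imports "Jordan_Normal_Form.Jordan_Normal_Form" "Jordan_Normal_Form.Gauss_Jordan_Elimination"
begin

definition matB :: "real \<Rightarrow> real \<Rightarrow> complex mat" where
  "matB D \<beta> = mat_of_rows_list 2
     [[complex_of_real \<beta>, - complex_of_real (D/2)],
      [complex_of_real (D/2), complex_of_real \<beta>]]"

definition matN0 :: "real \<Rightarrow> real \<Rightarrow> complex mat" where
  "matN0 \<delta> \<alpha> = mat_of_rows_list 2
     [[complex_of_real \<delta>, - complex_of_real \<alpha>],
      [complex_of_real \<alpha>, complex_of_real \<delta>]]"

definition A_inf :: "real \<Rightarrow> real \<Rightarrow> real \<Rightarrow> real \<Rightarrow> complex \<Rightarrow> complex mat" where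
  "A_inf D \<beta> \<delta> \<alpha> lam = four_block_mat
     (0\<^sub>m 2 2) (1\<^sub>m 2)
     (the (mat_inverse (matB D \<beta>)) * (lam \<cdot>\<^sub>m 1\<^sub>m 2 - matN0 \<delta> \<alpha>)) (0\<^sub>m 2 2)"

definition sigma_ess :: "real \<Rightarrow> real \<Rightarrow> real \<Rightarrow> real \<Rightarrow> complex set" where
  "sigma_ess D \<beta> \<delta> \<alpha> = {\<mu>. \<exists>s::real.
      \<mu> = Complex \<delta> \<alpha> - complex_of_real (s^2) * Complex \<beta> (D/2) \<or>
      \<mu> = Complex \<delta> (-\<alpha>) - complex_of_real (s^2) * Complex \<beta> (-D/2)}"

end

theory Submission
  imports Defs
begin


abbreviation m2 :: "'a \<Rightarrow> 'a \<Rightarrow> 'a \<Rightarrow> 'a \<Rightarrow> 'a mat" where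
  "m2 a b c d \<equiv> mat_of_rows_list 2 [[a,b],[c,d]]"
lemma m2_mult: "m2 (a::'a::comm_ring_1) b c d * m2 e f g h = m2 (a*e+b*g) (a*f+b*h) (c*e+d*g) (c*f+d*h)"
  by (rule eq_matI) (auto simp: mat_of_rows_list_def scalar_prod_def less_Suc_eq numeral_2_eq_2)
lemma m2_one: "(1\<^sub>m 2 :: 'a::comm_ring_1 mat) = m2 1 0 0 1"
  by (rule eq_matI) (auto simp: mat_of_rows_list_def less_Suc_eq numeral_2_eq_2)
lemma m2_zero: "(0\<^sub>m 2 2 :: 'a::comm_ring_1 mat) = m2 0 0 0 0"
  by (rule eq_matI) (auto simp: mat_of_rows_list_def less_Suc_eq numeral_2_eq_2)
lemma m2_smult: "(k::'a::comm_ring_1) \<cdot>\<^sub>m m2 a b c d = m2 (k*a) (k*b) (k*c) (k*d)"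
  by (rule eq_matI) (auto simp: mat_of_rows_list_def less_Suc_eq numeral_2_eq_2)
lemma m2_minus: "m2 (a::'a::comm_ring_1) b c d - m2 e f g h = m2 (a-e) (b-f) (c-g) (d-h)"
  by (rule eq_matI) (auto simp: mat_of_rows_list_def less_Suc_eq numeral_2_eq_2)
lemma m2_uminus: "- m2 (a::'a::comm_ring_1) b c d = m2 (-a) (-b) (-c) (-d)"
  by (rule eq_matI) (auto simp: mat_of_rows_list_def less_Suc_eq numeral_2_eq_2)
lemma m2_index: "m2 a b c d $$ (0,0) = a" "m2 a b c d $$ (0,1) = b" "m2 a b c d $$ (1,0) = c" "m2 a b c d $$ (1,1) = d"
  by (auto simp: mat_of_rows_list_def)
lemma m2_eq: "m2 a b c d = m2 e f g h \<longleftrightarrow> a = e \<and> b = f \<and> c = g \<and> d = h"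
proof
  assume h: "m2 a b c d = m2 e f g h"
  have "\<And>ij. m2 a b c d $$ ij = m2 e f g h $$ ij"
    using h by (simp only:)
  from this[of "(0,0)"] this[of "(0,1)"] this[of "(1,0)"] this[of "(1,1)"]
  show "a = e \<and> b = f \<and> c = g \<and> d = h" by (simp only: m2_index simp_thms)
next
  assume "a = e \<and> b = f \<and> c = g \<and> d = h"
  then show "m2 a b c d = m2 e f g h" by (elim conjE) (simp only:)
qed
lemma m2_carrier: "m2 a b c d \<in> carrier_mat 2 2"
proof -
  have "length [[a,b],[c,d]] = 2" by simp
  then show ?thesis unfolding mat_of_rows_list_def by (simp only: mat_carrier)
qed

lemma det_1x1: assumes "(A :: 'a :: comm_ring_1 mat) \<in> carrier_mat 1 1" shows "det A = A $$ (0,0)"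
proof -
  have "mat_delete A 0 0 \<in> carrier_mat 0 0" using assms by (auto simp: mat_delete_def)
  then show ?thesis using laplace_expansion_row[OF assms, of 0] assms
  by (simp add: cofactor_def)
qed
lemma det_2x2: assumes "(A :: 'a :: comm_ring_1 mat) \<in> carrier_mat 2 2"
  shows "det A = A $$ (0,0) * A $$ (1,1) - A $$ (0,1) * A $$ (1,0)"
proof -
  have "det A = (\<Sum>j<2. A $$ (0,j) * cofactor A 0 j)" using laplace_expansion_row[OF assms, of 0] by simp
  also have "\<dots> = A $$ (0,0) * cofactor A 0 0 + A $$ (0,1) * cofactor A 0 1"
    by (simp add: numeral_2_eq_2)
  also have "cofactor A 0 0 = A $$ (1,1)" unfolding cofactor_def using assms
    by (subst det_1x1) (auto simp: mat_delete_def)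
  also have "cofactor A 0 1 = - A $$ (1,0)" unfolding cofactor_def using assms
    by (subst det_1x1) (auto simp: mat_delete_def)
  finally show ?thesis by (simp add: algebra_simps)
qed
lemma det_m2: "det (m2 (a::'a::comm_ring_1) b c d) = a * d - b * c"
  by (simp only: det_2x2[OF m2_carrier] m2_index)

lemma inverse_m2:
  fixes B Bi :: "'a::field mat"
  assumes Bc: "B \<in> carrier_mat 2 2" and Bic: "Bi \<in> carrier_mat 2 2"
    and 1: "B * Bi = 1\<^sub>m 2" and 2: "Bi * B = 1\<^sub>m 2"
  shows "the (mat_inverse B) = Bi"
proof (cases "mat_inverse B")
  case None
  from mat_inverse(1)[OF Bc None, of undefined] Bc Bic 1 2 show ?thesis
    by (auto simp: Units_def ring_mat_def)
next
  case (Some C)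
  from mat_inverse(2)[OF Bc Some] have "B * C = 1\<^sub>m 2" "C \<in> carrier_mat 2 2" by auto
  then have "Bi * (B * C) = Bi" using Bic by simp
  then have "(Bi * B) * C = Bi" using Bic Bc \<open>C \<in> carrier_mat 2 2\<close>
    by (simp add: assoc_mult_mat)
  then show ?thesis using 2 Some \<open>C \<in> carrier_mat 2 2\<close> by simp
qed

lemma A_inf_char_poly:
  fixes D \<beta> \<delta> \<alpha> :: real and lam :: complex
  assumes "(D, \<beta>) \<noteq> (0, 0)"
  defines "b \<equiv> complex_of_real \<beta>" and "d \<equiv> complex_of_real (D/2)"
    and "a \<equiv> complex_of_real \<alpha>" and "x \<equiv> lam - complex_of_real \<delta>"
  defines "\<Delta> \<equiv> b*b + d*d"
  defines "u \<equiv> (b*x - d*a)/\<Delta>" and "w \<equiv> (b*a + d*x)/\<Delta>"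
  shows "char_poly (A_inf D \<beta> \<delta> \<alpha> lam) = [:-(u - \<i>*w), 0, 1:] * [:-(u + \<i>*w), 0, 1:]"
    and "A_inf D \<beta> \<delta> \<alpha> lam \<in> carrier_mat 4 4"
proof -
  have "\<beta>*\<beta> + (D/2)*(D/2) > 0" using assms(1)
    using assms(1) by (cases "\<beta> = 0") (auto intro!: add_pos_nonneg simp: zero_less_mult_iff)
  then have \<Delta>: "\<Delta> \<noteq> 0" unfolding \<Delta>_def b_def d_def
    by (metis of_real_add of_real_eq_0_iff of_real_mult order_less_irrefl)
  define Bi where "Bi = m2 (b/\<Delta>) (d/\<Delta>) (-d/\<Delta>) (b/\<Delta>)"
  have B: "matB D \<beta> = m2 b (-d) d b" unfolding matB_def b_def d_def by simp
  have inv: "the (mat_inverse (matB D \<beta>)) = Bi"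
    unfolding B Bi_def
    by (rule inverse_m2) (use \<Delta> in \<open>auto simp: m2_carrier m2_mult m2_one m2_eq add_divide_distrib[symmetric] diff_divide_distrib[symmetric] \<Delta>_def[symmetric] algebra_simps\<close>)
  have M: "the (mat_inverse (matB D \<beta>)) * (lam \<cdot>\<^sub>m 1\<^sub>m 2 - matN0 \<delta> \<alpha>) = m2 u w (-w) u"
    unfolding inv Bi_def matN0_def m2_one m2_smult m2_minus m2_mult m2_eq u_def w_def
    using \<Delta> by (auto simp: x_def a_def field_simps)
  have A: "A_inf D \<beta> \<delta> \<alpha> lam = four_block_mat (m2 0 0 0 0) (m2 1 0 0 1) (m2 u w (-w) u) (m2 0 0 0 0)"
    unfolding A_inf_def M by (simp only: m2_zero m2_one)
  show Ac: "A_inf D \<beta> \<delta> \<alpha> lam \<in> carrier_mat 4 4" unfolding A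
    using four_block_carrier_mat[OF m2_carrier m2_carrier] by simp
  have "poly (char_poly (A_inf D \<beta> \<delta> \<alpha> lam)) k = poly ([:-(u - \<i>*w), 0, 1:] * [:-(u + \<i>*w), 0, 1:]) k" for k
  proof -
    have "- char_matrix (A_inf D \<beta> \<delta> \<alpha> lam) k = four_block_mat (m2 k 0 0 k) (m2 (-1) 0 0 (-1)) (m2 (-u) (-w) w (-u)) (m2 k 0 0 k)"
      unfolding A char_matrix_def
      by (rule eq_matI) (auto simp: mat_of_rows_list_def less_Suc_eq numeral_eq_Suc)
    then have "poly (char_poly (A_inf D \<beta> \<delta> \<alpha> lam)) k = det (four_block_mat (m2 k 0 0 k) (m2 (-1) 0 0 (-1)) (m2 (-u) (-w) w (-u)) (m2 k 0 0 k))"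
      using char_poly_matrix[OF Ac] by simp
    also have "\<dots> = det (m2 k 0 0 k * m2 k 0 0 k - m2 (-1) 0 0 (-1) * m2 (-u) (-w) w (-u))"
      by (rule det_four_block_mat[OF m2_carrier m2_carrier m2_carrier m2_carrier]) (simp add: m2_mult m2_eq)
    also have "\<dots> = poly ([:-(u - \<i>*w), 0, 1:] * [:-(u + \<i>*w), 0, 1:]) k"
      by (simp add: m2_mult m2_minus det_m2 algebra_simps power2_eq_square)
    finally show ?thesis .
  qed
  then show "char_poly (A_inf D \<beta> \<delta> \<alpha> lam) = [:-(u - \<i>*w), 0, 1:] * [:-(u + \<i>*w), 0, 1:]"
    using poly_eq_poly_eq_iff by blast
qed


lemma sqrt_set:
  fixes p :: complex assumes "p \<noteq> 0"
  shows "{\<mu>. \<mu>^2 = p} = {csqrt p, - csqrt p}" and "card {\<mu>. \<mu>^2 = p} = 2"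
proof -
  show 1: "{\<mu>. \<mu>^2 = p} = {csqrt p, - csqrt p}"
  proof (rule Set.set_eqI, rule iffI)
    fix m assume "m \<in> {\<mu>. \<mu>^2 = p}"
    then have "m^2 = (csqrt p)^2" by simp
    then show "m \<in> {csqrt p, - csqrt p}" unfolding power2_eq_iff by blast
  next
    fix m assume "m \<in> {csqrt p, - csqrt p}"
    then show "m \<in> {\<mu>. \<mu>^2 = p}" by auto
  qed
  have "csqrt p \<noteq> 0" using assms by (metis power2_csqrt power_zero_numeral)
  have "csqrt p \<noteq> - csqrt p"
  proof
    assume eq: "csqrt p = - csqrt p"
    then have "csqrt p + csqrt p = 0" by (metis add.left_inverse)
    then have "2 * csqrt p = 0" by (simp only: mult_2)
    with \<open>csqrt p \<noteq> 0\<close> show False by simp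
  qed
  then show "card {\<mu>. \<mu>^2 = p} = 2" unfolding 1 by simp
qed

lemma card_4:
  fixes p1 p2 :: complex assumes "p1 \<noteq> 0" "p2 \<noteq> 0" "p1 \<noteq> p2"
  shows "card ({\<mu>. \<mu>^2 = p1} \<union> {\<mu>. \<mu>^2 = p2}) = 4"
proof -
  have "card ({\<mu>. \<mu>^2 = p1} \<union> {\<mu>. \<mu>^2 = p2}) = card {\<mu>. \<mu>^2 = p1} + card {\<mu>. \<mu>^2 = p2}"
  proof (rule card_Un_disjoint)
    show "finite {\<mu>. \<mu>^2 = p1}" using sqrt_set(1)[OF assms(1)] by (simp only: finite.emptyI finite_insert)
    show "finite {\<mu>. \<mu>^2 = p2}" using sqrt_set(1)[OF assms(2)] by (simp only: finite.emptyI finite_insert)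
    show "{\<mu>. \<mu>^2 = p1} \<inter> {\<mu>. \<mu>^2 = p2} = {}" using assms(3) by auto
  qed
  then show ?thesis using sqrt_set(2) assms by simp
qed

lemma order_2:
  fixes p \<mu> :: complex assumes "p \<noteq> 0" "\<mu>^2 = p"
  shows "order \<mu> ([:-p,0,1:] * [:-p,0,1:]) = 2"
proof -
  have "\<mu> \<noteq> 0" using assms by auto
  have f: "[:-p,0,1:] = [:-\<mu>,1:] * [:\<mu>,1:]" using assms(2) by (simp add: power2_eq_square)
  have "[:-p,0,1:] * [:-p,0,1:] = [:-\<mu>,1:]^2 * [:\<mu>,1:]^2" unfolding f by (simp add: power2_eq_square algebra_simps)
  moreover have "[:-\<mu>,1:]^2 * [:\<mu>,1:]^2 \<noteq> 0" by simp
  moreover have "order \<mu> ([:\<mu>,1:]^2) = 0"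
    by (rule order_0I) (use \<open>\<mu> \<noteq> 0\<close> in \<open>simp add: power2_eq_square\<close>)
  ultimately show ?thesis by (simp add: order_mult order_power_n_n)
qed

lemma not_neg_real:
  fixes p :: complex assumes "\<And>s::real. p \<noteq> - of_real (s^2)"
  shows "p \<noteq> 0" and "p \<in> \<real> \<Longrightarrow> Re p > 0"
proof -
  show "p \<noteq> 0" using assms[of 0] by simp
  assume "p \<in> \<real>"
  show "Re p > 0"
  proof (rule ccontr)
    assume "\<not> Re p > 0"
    then have "p = - of_real ((sqrt (- Re p))^2)" using \<open>p \<in> \<real>\<close>
      by (simp add: complex_eq_iff Reals_def)
    then show False using assms by blast
  qed
qed


theorem proposition4p5:
  fixes D \<beta> \<delta> \<alpha> :: real and lam :: complex
  assumes "\<beta> \<ge> 0" and "(D, \<beta>) \<noteq> (0, 0)"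
    and "lam \<notin> sigma_ess D \<beta> \<delta> \<alpha>"
  defines "A \<equiv> A_inf D \<beta> \<delta> \<alpha> lam"
  defines "C1 \<equiv> card {\<mu>. eigenvalue A \<mu>} = 4"
    and "C2 \<equiv> (D = 0 \<and> \<alpha> = 0 \<and> (lam \<in> \<real> \<longrightarrow> Re lam > \<delta>))"
    and "C3 \<equiv> (D \<noteq> 0 \<and> \<alpha> / D < 0 \<and> lam = of_real (- 2 * \<alpha> * \<beta> / D + \<delta>))"
  shows "((C1 \<and> \<not> C2 \<and> \<not> C3) \<or> (\<not> C1 \<and> C2 \<and> \<not> C3) \<or> (\<not> C1 \<and> \<not> C2 \<and> C3)) \<and>
         (C2 \<longrightarrow>
           {\<mu>. eigenvalue A \<mu>} = {\<mu>. \<mu>^2 = (lam - of_real \<delta>) / of_real \<beta>} \<and>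
           card {\<mu>. eigenvalue A \<mu>} = 2 \<and>
           (\<forall>\<mu>. eigenvalue A \<mu> \<longrightarrow> order \<mu> (char_poly A) = 2)) \<and>
         (C3 \<longrightarrow>
           {\<mu>. eigenvalue A \<mu>} = {\<mu>. \<mu>^2 = of_real (- 2 * \<alpha> / D)} \<and>
           (\<beta> \<noteq> 0 \<longrightarrow> of_real (- 2 * \<alpha> / D) = (lam - of_real \<delta>) / of_real \<beta>) \<and>
           card {\<mu>. eigenvalue A \<mu>} = 2 \<and>
           (\<forall>\<mu>. eigenvalue A \<mu> \<longrightarrow> order \<mu> (char_poly A) = 2))"
proof -
  define b where "b = complex_of_real \<beta>"
  define d where "d = complex_of_real (D/2)"
  define a where "a = complex_of_real \<alpha>"
  define x where "x = lam - complex_of_real \<delta>"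
  define \<Delta> where "\<Delta> = b*b + d*d"
  define u where "u = (b*x - d*a)/\<Delta>"
  define w where "w = (b*a + d*x)/\<Delta>"
  define p1 where "p1 = u - \<i>*w"
  define p2 where "p2 = u + \<i>*w"
  have CP: "char_poly A = [:-p1, 0, 1:] * [:-p2, 0, 1:]"
    using A_inf_char_poly(1)[OF assms(2), of \<delta> \<alpha> lam]
    unfolding A_def p1_def p2_def u_def w_def \<Delta>_def b_def d_def a_def x_def by simp
  have Ac: "A \<in> carrier_mat 4 4" unfolding A_def by (rule A_inf_char_poly(2)[OF assms(2)])
  have eig: "eigenvalue A \<mu> \<longleftrightarrow> \<mu>^2 = p1 \<or> \<mu>^2 = p2" for \<mu>
  proof -
    have "poly (char_poly A) \<mu> = (\<mu>^2 - p1) * (\<mu>^2 - p2)" unfolding CP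
      by (simp add: algebra_simps power2_eq_square)
    then show ?thesis using eigenvalue_root_char_poly[OF Ac] by simp
  qed
  have ES: "{\<mu>. eigenvalue A \<mu>} = {\<mu>. \<mu>^2 = p1} \<union> {\<mu>. \<mu>^2 = p2}"
    using eig by blast
  have pos: "\<beta>*\<beta> + (D/2)*(D/2) > 0" using assms(2)
    by (cases "\<beta> = 0") (auto intro!: add_pos_nonneg simp: zero_less_mult_iff)
  then have \<Delta>0: "\<Delta> \<noteq> 0" unfolding \<Delta>_def b_def d_def
    by (metis of_real_add of_real_eq_0_iff of_real_mult order_less_irrefl)
  have \<Delta>f: "\<Delta> = (b + \<i>*d) * (b - \<i>*d)" unfolding \<Delta>_def by (simp add: algebra_simps)
  have b1: "b + \<i>*d \<noteq> 0" and b2: "b - \<i>*d \<noteq> 0" using \<Delta>0 \<Delta>f by auto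
  have Du: "\<Delta> * u = b*x - d*a" unfolding u_def using \<Delta>0 by simp
  have Dw: "\<Delta> * w = b*a + d*x" unfolding w_def using \<Delta>0 by simp
  have DP1: "\<Delta> * p1 = (b - \<i>*d)*(x - \<i>*a)" unfolding p1_def right_diff_distrib Du
    by (simp add: Dw algebra_simps)
  have DP2: "\<Delta> * p2 = (b + \<i>*d)*(x + \<i>*a)" unfolding p2_def distrib_left Du
    by (simp add: Dw algebra_simps)
  have F1: "p1 = (x - \<i>*a)/(b + \<i>*d)"
  proof -
    have "p1 = (b - \<i>*d)*(x - \<i>*a)/\<Delta>" using DP1 \<Delta>0 by (simp add: eq_divide_eq mult.commute)
    also have "\<dots> = (x - \<i>*a)/(b + \<i>*d)" unfolding \<Delta>f using b2 by simp
    finally show ?thesis .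
  qed
  have F1': "p2 = (x + \<i>*a)/(b - \<i>*d)"
  proof -
    have "p2 = (b + \<i>*d)*(x + \<i>*a)/\<Delta>" using DP2 \<Delta>0 by (simp add: eq_divide_eq mult.commute)
    also have "\<dots> = (x + \<i>*a)/(b - \<i>*d)" unfolding \<Delta>f using b1 by simp
    finally show ?thesis .
  qed
  have F2: "p1 \<noteq> - of_real (s^2)" for s :: real
  proof
    assume "p1 = - of_real (s^2)"
    then have "x - \<i>*a = - of_real (s^2) * (b + \<i>*d)" using F1 b1 by (simp add: field_simps)
    then have "lam = Complex \<delta> \<alpha> - complex_of_real (s^2) * Complex \<beta> (D/2)"
      unfolding x_def a_def b_def d_def Complex_eq by (simp add: algebra_simps)
    then show False using assms(3) unfolding sigma_ess_def by blast
  qed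
  have F2': "p2 \<noteq> - of_real (s^2)" for s :: real
  proof
    assume "p2 = - of_real (s^2)"
    then have "x + \<i>*a = - of_real (s^2) * (b - \<i>*d)" using F1' b2 by (simp add: field_simps)
    then have "lam = Complex \<delta> (-\<alpha>) - complex_of_real (s^2) * Complex \<beta> (-D/2)"
      unfolding x_def a_def b_def d_def Complex_eq by (simp add: field_simps)
    then show False using assms(3) unfolding sigma_ess_def by blast
  qed
  have p1nz: "p1 \<noteq> 0" and p2nz: "p2 \<noteq> 0" using not_neg_real(1) F2 F2' by blast+
  have "p2 - p1 = 2*\<i>*w" unfolding p1_def p2_def by (simp add: algebra_simps)
  then have "p1 = p2 \<longleftrightarrow> w = 0" by (metis eq_iff_diff_eq_0 mult_eq_0_iff complex_i_not_zero zero_neq_numeral)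
  then have F3: "p1 = p2 \<longleftrightarrow> b*a + d*x = 0" unfolding w_def using \<Delta>0 by simp
  have eqcase: "card {\<mu>. eigenvalue A \<mu>} = 2 \<and> (\<forall>\<mu>. eigenvalue A \<mu> \<longrightarrow> order \<mu> (char_poly A) = 2)
     \<and> {\<mu>. eigenvalue A \<mu>} = {\<mu>. \<mu>^2 = p1}" if "p1 = p2"
    using that ES sqrt_set(2)[OF p1nz] order_2[OF p1nz] eig CP by auto
  have neqcase: "C1" if "p1 \<noteq> p2"
    unfolding C1_def ES using card_4[OF p1nz p2nz that] .
  show ?thesis
  proof (cases "D = 0")
    case True
    then have bpos: "\<beta> > 0" using assms(1,2) by auto
    then have bnz: "b \<noteq> 0" unfolding b_def by simp
    have d0: "d = 0" using True by (simp add: d_def)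
    have C3f: "\<not> C3" using True unfolding C3_def by simp
    show ?thesis
    proof (cases "\<alpha> = 0")
      case True2: True
      have eq: "p1 = p2" using F3 d0 True2 by (simp add: a_def)
      have p1x: "p1 = x / b" using F1 d0 True2 by (simp add: a_def)
      have C2 unfolding C2_def
      proof (intro conjI impI)
        show "D = 0" "\<alpha> = 0" using True True2 by auto
        assume "lam \<in> \<real>"
        then have "p1 \<in> \<real>" unfolding p1x x_def b_def by (auto intro!: Reals_divide Reals_diff)
        then have "Re p1 > 0" using not_neg_real(2) F2 by blast
        moreover have "Re p1 = (Re lam - \<delta>) / \<beta>" unfolding p1x x_def b_def by (simp add: Re_divide_of_real)
        ultimately show "Re lam > \<delta>" using bpos by (simp add: zero_less_divide_iff)
      qed
      have "card {\<mu>. eigenvalue A \<mu>} = 2" using eqcase[OF eq] by blast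
      then have "\<not> C1" unfolding C1_def by simp
      moreover have "{\<mu>. \<mu>^2 = p1} = {\<mu>. \<mu>^2 = (lam - of_real \<delta>) / of_real \<beta>}"
        unfolding p1x x_def b_def ..
      ultimately show ?thesis using eqcase[OF eq] \<open>C2\<close> C3f by blast
    next
      case False
      have "a \<noteq> 0" using False by (simp add: a_def)
      then have "p1 \<noteq> p2" using F3 d0 bnz by simp
      then have C1 by (rule neqcase)
      moreover have "\<not> C2" using False unfolding C2_def by simp
      ultimately show ?thesis using C3f by simp
    qed
  next
    case False
    have dnz: "d \<noteq> 0" using False by (simp add: d_def)
    have C2f: "\<not> C2" using False unfolding C2_def by simp
    have lamiff: "b*a + d*x = 0 \<longleftrightarrow> lam = of_real (- 2 * \<alpha> * \<beta> / D + \<delta>)"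
      unfolding b_def a_def d_def x_def using False by (auto simp: field_simps)
    show ?thesis
    proof (cases "p1 = p2")
      case True
      have "b*a + d*x = 0" using F3 True by simp
      then have lamv: "lam = of_real (- 2 * \<alpha> * \<beta> / D + \<delta>)" using lamiff by simp
      have "d*x = -(b*a)" using \<open>b*a + d*x = 0\<close> by (simp add: eq_neg_iff_add_eq_0 add.commute)
      then have xv: "x = -(b*a)/d" using dnz by (simp add: field_simps)
      have "x - \<i>*a = (-a/d) * (b + \<i>*d)" unfolding xv using dnz by (simp add: field_simps)
      then have "p1 = -a/d" using F1 b1 by simp
      also have "-a/d = of_real (- 2 * \<alpha> / D)" unfolding a_def d_def by simp
      finally have p1v: "p1 = of_real (- 2 * \<alpha> / D)" .
      have "p1 \<in> \<real>" unfolding p1v by (rule Reals_of_real)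
      have "Re p1 > 0" by (rule not_neg_real(2)[of p1, OF F2 \<open>p1 \<in> \<real>\<close>])
      moreover have "Re p1 = -2 * (\<alpha> / D)" unfolding p1v by simp
      ultimately have "\<alpha> / D < 0" by linarith
      then have C3 unfolding C3_def using False lamv by simp
      have "card {\<mu>. eigenvalue A \<mu>} = 2" using eqcase[OF True] by blast
      then have "\<not> C1" unfolding C1_def by simp
      moreover have "\<beta> \<noteq> 0 \<longrightarrow> of_real (- 2 * \<alpha> / D) = (lam - of_real \<delta>) / of_real \<beta>"
        unfolding lamv using False by (simp add: field_simps)
      ultimately show ?thesis using eqcase[OF True] \<open>C3\<close> C2f p1v by blast
    next
      case False2: False
      then have C1 by (rule neqcase)
      moreover have "\<not> C3"
      proof
        assume C3
        then have "lam = of_real (- 2 * \<alpha> * \<beta> / D + \<delta>)" unfolding C3_def by simp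
        then have "p1 = p2" using lamiff F3 by simp
        with False2 show False by simp
      qed
      ultimately show ?thesis using C2f by simp
    qed
  qed
qed

end
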